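(* Let $X$ be a finite set and $D$ a directed distance on $X$. Then the tight-span $T_D$ is a tree if and only if $D$ has an oriented tree realisation $(\Gamma,\alpha,\mathcal{F})$ such that $\Gamma$ is a directed path.
   Context: A directed distance on $X$ is a map $D:X\times X\to\mathbb{R}_{\ge0}$ with $D(x,x)=0$ (not necessarily symmetric). Let $X_l,X_r$ be two disjoint copies of $X$ (write $x_l,x_r$ for the copies of $x$). $P_D=\{f\in\mathbb{R}^{X_l\cup X_r}:f\ge0,\ f(x_l)+f(y_r)\ge D(x,y)\ \forall x,y\in X\}$ and $T_D$ is the set of minimal elements of $P_D$ for the coordinatewise order; $T_D$ is a polyhedral complex (the union of bounded faces of $P_D$), and "$T_D$ is a tree" means it has dimension at most $1$. An oriented tree $\Gamma$ is a directed graph whose underlying undirected graph is a tree; with edge lengths $\alpha:E(\Gamma)\to\mathbb{R}_{\ge0}$, $D_{\Gamma,\alpha}(u,v)$ is the sum of $\alpha(e)$ over edges on the undirected $u$–$v$ path directed from $u$ towards $v$, and $D_{\Gamma,\alpha}(U,W)=\min_{u\in U,w\in W}D_{\Gamma,\alpha}(u,w)$. $(\Gamma,\alpha,\mathcal{F})$, $\mathcal{F}=\{F_x:x\in X\}$ subtrees of $\Gamma$, is an oriented tree realisation of $D$ if $D(x,y)=D_{\Gamma,\alpha}(F_x,F_y)$ for all $x,y$. $\Gamma$ is a directed path if its underlying tree is a path and all edges are oriented in the same direction along it. *)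

theory Defs
  imports "HOL-Analysis.Analysis"
begin

text \<open>The finite set X is represented by a finite type 'a. The space of functions on
  X_l \<union> X_r is real ^ ('a + 'a), with Inl x the copy x_l and Inr x the copy x_r.\<close>

definition directed_distance :: "('a \<Rightarrow> 'a \<Rightarrow> real) \<Rightarrow> bool" where
  "directed_distance D \<longleftrightarrow> (\<forall>x y. D x y \<ge> 0) \<and> (\<forall>x. D x x = 0)"

definition PD :: "('a::finite \<Rightarrow> 'a \<Rightarrow> real) \<Rightarrow> (real ^ ('a + 'a)) set" where
  "PD D = {f. (\<forall>i. f $ i \<ge> 0) \<and> (\<forall>x y. f $ (Inl x) + f $ (Inr y) \<ge> D x y)}"

definition TD :: "('a::finite \<Rightarrow> 'a \<Rightarrow> real) \<Rightarrow> (real ^ ('a + 'a)) set" where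
  "TD D = {f \<in> PD D. \<forall>g \<in> PD D. (\<forall>i. g $ i \<le> f $ i) \<longrightarrow> g = f}"

text \<open>T_D is a tree: the polyhedral complex T_D has dimension at most 1, i.e. every convex
  subset of T_D (in particular every cell) has affine dimension at most 1.\<close>
definition tight_span_is_tree :: "('a::finite \<Rightarrow> 'a \<Rightarrow> real) \<Rightarrow> bool" where
  "tight_span_is_tree D \<longleftrightarrow> (\<forall>S. convex S \<and> S \<subseteq> TD D \<longrightarrow> aff_dim S \<le> 1)"

definition uadj :: "(nat \<times> nat) set \<Rightarrow> nat \<Rightarrow> nat \<Rightarrow> bool" where
  "uadj E u v \<longleftrightarrow> (u, v) \<in> E \<or> (v, u) \<in> E"

definition upath :: "(nat \<times> nat) set \<Rightarrow> nat list \<Rightarrow> nat \<Rightarrow> nat \<Rightarrow> bool" where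
  "upath E p u v \<longleftrightarrow> p \<noteq> [] \<and> hd p = u \<and> last p = v \<and> distinct p \<and>
     (\<forall>i. Suc i < length p \<longrightarrow> uadj E (p ! i) (p ! Suc i))"

definition oriented_tree :: "nat set \<Rightarrow> (nat \<times> nat) set \<Rightarrow> bool" where
  "oriented_tree V E \<longleftrightarrow> finite V \<and> V \<noteq> {} \<and> E \<subseteq> V \<times> V \<and>
     (\<forall>u v. (u, v) \<in> E \<longrightarrow> u \<noteq> v \<and> (v, u) \<notin> E) \<and>
     (\<forall>u\<in>V. \<forall>v\<in>V. \<exists>!p. upath E p u v)"

definition tree_dist :: "(nat \<times> nat) set \<Rightarrow> (nat \<times> nat \<Rightarrow> real) \<Rightarrow> nat \<Rightarrow> nat \<Rightarrow> real" where
  "tree_dist E \<alpha> u v = (let p = (THE p. upath E p u v) in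
     (\<Sum>i<length p - 1. if (p ! i, p ! Suc i) \<in> E then \<alpha> (p ! i, p ! Suc i) else 0))"

definition tree_set_dist :: "(nat \<times> nat) set \<Rightarrow> (nat \<times> nat \<Rightarrow> real) \<Rightarrow> nat set \<Rightarrow> nat set \<Rightarrow> real" where
  "tree_set_dist E \<alpha> U W = Min {tree_dist E \<alpha> u w | u w. u \<in> U \<and> w \<in> W}"

definition subtree :: "nat set \<Rightarrow> (nat \<times> nat) set \<Rightarrow> nat set \<Rightarrow> bool" where
  "subtree V E F \<longleftrightarrow> F \<noteq> {} \<and> F \<subseteq> V \<and>
     (\<forall>u\<in>F. \<forall>v\<in>F. \<exists>p. upath E p u v \<and> set p \<subseteq> F)"

definition oriented_tree_realisation ::
  "('a \<Rightarrow> 'a \<Rightarrow> real) \<Rightarrow> nat set \<Rightarrow> (nat \<times> nat) set \<Rightarrow> (nat \<times> nat \<Rightarrow> real) \<Rightarrow> ('a \<Rightarrow> nat set) \<Rightarrow> bool" where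
  "oriented_tree_realisation D V E \<alpha> F \<longleftrightarrow> oriented_tree V E \<and> (\<forall>e\<in>E. \<alpha> e \<ge> 0) \<and>
     (\<forall>x. subtree V E (F x)) \<and> (\<forall>x y. D x y = tree_set_dist E \<alpha> (F x) (F y))"

definition directed_path :: "nat set \<Rightarrow> (nat \<times> nat) set \<Rightarrow> bool" where
  "directed_path V E \<longleftrightarrow> (\<exists>p. distinct p \<and> set p = V \<and>
     E = {(p ! i, p ! Suc i) | i. Suc i < length p})"

end

theory Submission
  imports Defs
begin


lemma maxr_ge: "(f::'a::finite \<Rightarrow> real) y \<le> (MAX y. f y)"
  by (simp add: Max_ge)

lemma maxr_le: "(\<And>y. (f::'a::finite \<Rightarrow> real) y \<le> c) \<Longrightarrow> (MAX y. f y) \<le> c"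
  by (simp add: Max_le_iff)

lemma maxr_ex: "\<exists>y. (MAX y. (f::'a::finite \<Rightarrow> real) y) = f y"
proof -
  have "(MAX y. f y) \<in> range f" by (rule Max_in) auto
  then show ?thesis by blast
qed

definition gst :: "('a::finite \<Rightarrow> 'a \<Rightarrow> real) \<Rightarrow> ('a \<Rightarrow> real) \<Rightarrow> 'a \<Rightarrow> real" where
  "gst D h x = max 0 (MAX y. D x y - h y)"
definition hst :: "('a::finite \<Rightarrow> 'a \<Rightarrow> real) \<Rightarrow> ('a \<Rightarrow> real) \<Rightarrow> 'a \<Rightarrow> real" where
  "hst D g y = max 0 (MAX x. D x y - g x)"
definition mk :: "('a::finite \<Rightarrow> real) \<Rightarrow> ('a \<Rightarrow> real) \<Rightarrow> real ^ ('a + 'a)" where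
  "mk g h = (\<chi> i. case i of Inl x \<Rightarrow> g x | Inr y \<Rightarrow> h y)"

lemma mk_Inl[simp]: "mk g h $ Inl x = g x" and mk_Inr[simp]: "mk g h $ Inr y = h y"
  by (simp_all add: mk_def)

lemma gst_nonneg: "0 \<le> gst D h x" by (simp add: gst_def)
lemma hst_nonneg: "0 \<le> hst D g y" by (simp add: hst_def)
lemma gst_ge: "D x y - h y \<le> gst D h x"
  unfolding gst_def using maxr_ge[of "\<lambda>y. D x y - h y" y] by linarith
lemma hst_ge: "D x y - g x \<le> hst D g y"
  unfolding hst_def using maxr_ge[of "\<lambda>x. D x y - g x" x] by linarith
lemma gst_le: "(\<And>y. D x y - h y \<le> c) \<Longrightarrow> 0 \<le> c \<Longrightarrow> gst D h x \<le> c"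
  unfolding gst_def using maxr_le[of "\<lambda>y. D x y - h y" c] by simp
lemma hst_le: "(\<And>x. D x y - g x \<le> c) \<Longrightarrow> 0 \<le> c \<Longrightarrow> hst D g y \<le> c"
  unfolding hst_def using maxr_le[of "\<lambda>x. D x y - g x" c] by simp

lemma hst_anti: assumes "\<And>x. g x \<le> g' x" shows "hst D g' y \<le> hst D g y"
proof (rule hst_le)
  fix x show "D x y - g' x \<le> hst D g y" using hst_ge[of D x y g] assms[of x] by linarith
qed (simp add: hst_nonneg)

lemma gst_anti: assumes "\<And>y. h y \<le> h' y" shows "gst D h' x \<le> gst D h x"
proof (rule gst_le)
  fix y show "D x y - h' y \<le> gst D h x" using gst_ge[of D x y h] assms[of y] by linarith
qed (simp add: gst_nonneg)

lemma TD_char: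
  assumes "f \<in> TD D"
  shows "f $ Inl x = gst D (\<lambda>y. f $ Inr y) x" "f $ Inr y = hst D (\<lambda>x. f $ Inl x) y"
proof -
  have P: "f \<in> PD D" and M: "\<And>g. g \<in> PD D \<Longrightarrow> (\<forall>i. g $ i \<le> f $ i) \<Longrightarrow> g = f"
    using assms by (auto simp: TD_def)
  have nn: "\<And>i. 0 \<le> f $ i" and c: "\<And>x y. D x y \<le> f $ Inl x + f $ Inr y" using P by (auto simp: PD_def)
  show "f $ Inl x = gst D (\<lambda>y. f $ Inr y) x"
  proof (rule ccontr)
    assume ne: "f $ Inl x \<noteq> gst D (\<lambda>y. f $ Inr y) x"
    have le: "gst D (\<lambda>y. f $ Inr y) x \<le> f $ Inl x"
      by (rule gst_le) (use c nn in \<open>auto simp: algebra_simps\<close>)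
    define g where "g = (\<chi> i. if i = Inl x then gst D (\<lambda>y. f $ Inr y) x else f $ i)"
    have "g \<in> PD D"
      unfolding PD_def g_def
    proof (intro CollectI conjI allI)
      fix i show "0 \<le> (\<chi> i. if i = Inl x then gst D (\<lambda>y. f $ Inr y) x else f $ i) $ i"
        using nn[of i] gst_nonneg[of D "\<lambda>y. f $ Inr y" x] by auto
    next
      fix x' y
      show "D x' y \<le> (\<chi> i. if i = Inl x then gst D (\<lambda>y. f $ Inr y) x else f $ i) $ Inl x' + (\<chi> i. if i = Inl x then gst D (\<lambda>y. f $ Inr y) x else f $ i) $ Inr y"
        using c[of x' y] gst_ge[of D x y "\<lambda>y. f $ Inr y"] by auto
    qed
    moreover have "\<forall>i. g $ i \<le> f $ i" using le by (auto simp: g_def)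
    ultimately have "g = f" by (rule M)
    then have "g $ Inl x = f $ Inl x" by simp
    with ne show False by (simp add: g_def)
  qed
  show "f $ Inr y = hst D (\<lambda>x. f $ Inl x) y"
  proof (rule ccontr)
    assume ne: "f $ Inr y \<noteq> hst D (\<lambda>x. f $ Inl x) y"
    have le: "hst D (\<lambda>x. f $ Inl x) y \<le> f $ Inr y"
      by (rule hst_le) (use c nn in \<open>auto simp: algebra_simps\<close>)
    define g where "g = (\<chi> i. if i = Inr y then hst D (\<lambda>x. f $ Inl x) y else f $ i)"
    have "g \<in> PD D"
      unfolding PD_def g_def
    proof (intro CollectI conjI allI)
      fix i show "0 \<le> (\<chi> i. if i = Inr y then hst D (\<lambda>x. f $ Inl x) y else f $ i) $ i"
        using nn[of i] hst_nonneg[of D "\<lambda>x. f $ Inl x" y] by auto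
    next
      fix x y'
      show "D x y' \<le> (\<chi> i. if i = Inr y then hst D (\<lambda>x. f $ Inl x) y else f $ i) $ Inl x + (\<chi> i. if i = Inr y then hst D (\<lambda>x. f $ Inl x) y else f $ i) $ Inr y'"
        using c[of x y'] hst_ge[of D x y "\<lambda>x. f $ Inl x"] by auto
    qed
    moreover have "\<forall>i. g $ i \<le> f $ i" using le by (auto simp: g_def)
    ultimately have "g = f" by (rule M)
    then have "g $ Inr y = f $ Inr y" by simp
    with ne show False by (simp add: g_def)
  qed
qed

lemma TD_intro:
  assumes g: "g = gst D h" and h: "h = hst D g"
  shows "mk g h \<in> TD D"
proof -
  have P: "mk g h \<in> PD D"
    unfolding PD_def
  proof (intro CollectI conjI allI)
    fix i show "0 \<le> mk g h $ i" using g h gst_nonneg[of D h] hst_nonneg[of D g]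
      by (cases i) auto
  next
    fix x y show "D x y \<le> mk g h $ Inl x + mk g h $ Inr y"
      using g gst_ge[of D x y h] by auto
  qed
  moreover have "\<forall>f \<in> PD D. (\<forall>i. f $ i \<le> mk g h $ i) \<longrightarrow> f = mk g h"
  proof (intro ballI impI)
    fix f assume f: "f \<in> PD D" and le: "\<forall>i. f $ i \<le> mk g h $ i"
    have c: "\<And>x y. D x y \<le> f $ Inl x + f $ Inr y" and nn: "\<And>i. 0 \<le> f $ i" using f by (auto simp: PD_def)
    have gl: "g x \<le> f $ Inl x" for x
    proof -
      have "gst D h x \<le> gst D (\<lambda>y. f $ Inr y) x"
        using le by (intro gst_anti) (metis mk_Inr)
      also have "\<dots> \<le> f $ Inl x" by (rule gst_le) (use c nn in \<open>auto simp: algebra_simps\<close>)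
      finally show ?thesis using g by simp
    qed
    have hl: "h y \<le> f $ Inr y" for y
    proof -
      have "hst D g y \<le> hst D (\<lambda>x. f $ Inl x) y"
        using le by (intro hst_anti) (metis mk_Inl)
      also have "\<dots> \<le> f $ Inr y" by (rule hst_le) (use c nn in \<open>auto simp: algebra_simps\<close>)
      finally show ?thesis using h by simp
    qed
    show "f = mk g h"
    proof (rule vec_eq_iff[THEN iffD2], rule allI)
      fix i show "f $ i = mk g h $ i"
        using le[rule_format, of i] gl hl by (cases i) (auto intro: antisym)
    qed
  qed
  ultimately show ?thesis by (simp add: TD_def)
qed

lemma gst_hst_gst:
  assumes "\<And>y. 0 \<le> h y"
  shows "gst D (hst D (gst D h)) = gst D h"
proof (rule ext, rule antisym)
  fix x
  show "gst D (hst D (gst D h)) x \<le> gst D h x"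
    by (rule gst_le) (auto simp: gst_nonneg algebra_simps intro: order.trans[OF _ add_left_mono[OF hst_ge]])
  have "hst D (gst D h) y \<le> h y" for y
    by (rule hst_le) (use assms gst_ge[of D _ y h] in \<open>auto simp: algebra_simps\<close>)
  then show "gst D h x \<le> gst D (hst D (gst D h)) x" by (rule gst_anti)
qed

lemma TD_from_h:
  assumes "\<And>y. 0 \<le> h y"
  shows "mk (gst D h) (hst D (gst D h)) \<in> TD D"
  by (rule TD_intro) (simp_all add: gst_hst_gst[OF assms])



definition sg :: "'a::finite + 'a \<Rightarrow> real" where
  "sg i = (case i of Inl _ \<Rightarrow> 1 | Inr _ \<Rightarrow> -1)"

definition sgnok :: "real ^ ('a::finite + 'a) \<Rightarrow> bool" where
  "sgnok z \<longleftrightarrow> (\<forall>i. 0 \<le> sg i * z $ i) \<or> (\<forall>i. sg i * z $ i \<le> 0)"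

lemma sg_sq: "sg i * sg i = 1" by (cases i) (auto simp: sg_def)
lemma sg_ne: "sg i \<noteq> 0" by (cases i) (auto simp: sg_def)

lemma sgnok_scale: "sgnok (d *\<^sub>R z) \<Longrightarrow> 0 < d \<Longrightarrow> sgnok z"
  unfolding sgnok_def
  by (auto simp: mult.left_commute[of "sg _"] zero_le_mult_iff mult_le_0_iff)

lemma convex3:
  assumes "convex S" "p \<in> S" "q \<in> S" "r \<in> S" "0 \<le> a" "0 \<le> b" "a + b \<le> 1"
  shows "(1 - a - b) *\<^sub>R p + a *\<^sub>R q + b *\<^sub>R r \<in> S"
proof -
  have "convex hull {p, q, r} \<subseteq> S"
    using assms by (intro hull_minimal) auto
  moreover have "(1 - a - b) *\<^sub>R p + a *\<^sub>R q + b *\<^sub>R r \<in> convex hull {p, q, r}"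
    unfolding convex_hull_3 using assms by (intro CollectI exI[of _ "1 - a - b"] exI[of _ a] exI[of _ b]) auto
  ultimately show ?thesis by auto
qed

lemma chain_collinear:
  fixes S :: "(real ^ ('a::finite + 'a)) set"
  assumes cvx: "convex S" and ch: "\<And>p q. p \<in> S \<Longrightarrow> q \<in> S \<Longrightarrow> sgnok (q - p)"
  shows "collinear S"
proof (cases "\<exists>p\<in>S. \<exists>q\<in>S. p \<noteq> q")
  case False
  then show ?thesis unfolding collinear_def by (intro exI[of _ 0]) auto
next
  case True
  then obtain p q where pS: "p \<in> S" and qS: "q \<in> S" and pq: "p \<noteq> q" by blast
  define u where "u = q - p"
  have u0: "u \<noteq> 0" using pq by (simp add: u_def)
  have key: "\<exists>l. r - p = l *\<^sub>R u" if rS: "r \<in> S" for r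
  proof -
    define v where "v = r - p"
    have ok: "sgnok (v + k *\<^sub>R u)" for k
    proof -
      define d where "d = 1 / (\<bar>k\<bar> + 1)"
      have d0: "0 < d" by (simp add: d_def add_pos_nonneg)
      have dk: "d * \<bar>k\<bar> + d = 1" by (simp add: d_def field_simps)
      show ?thesis
      proof (cases "0 \<le> k")
        case True
        have x1: "(1 - d*k - d) *\<^sub>R p + (d*k) *\<^sub>R q + d *\<^sub>R r \<in> S"
          using True dk d0 by (intro convex3[OF cvx pS qS rS]) auto
        have "sgnok (((1 - d*k - d) *\<^sub>R p + (d*k) *\<^sub>R q + d *\<^sub>R r) - p)"
          by (rule ch[OF pS x1])
        moreover have "((1 - d*k - d) *\<^sub>R p + (d*k) *\<^sub>R q + d *\<^sub>R r) - p = d *\<^sub>R (v + k *\<^sub>R u)"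
          by (simp add: u_def v_def algebra_simps)
        ultimately show ?thesis using sgnok_scale d0 by metis
      next
        case False
        have "d * k < 0" using d0 False by (simp add: mult_pos_neg)
        then have x1: "(1 - 0 - d) *\<^sub>R p + 0 *\<^sub>R q + d *\<^sub>R r \<in> S"
          using dk d0 False by (intro convex3[OF cvx pS qS rS]) auto
        have x2: "(1 - (-d*k) - 0) *\<^sub>R p + (-d*k) *\<^sub>R q + 0 *\<^sub>R r \<in> S"
          using dk d0 False by (intro convex3[OF cvx pS qS rS]) (auto simp: mult_nonneg_nonpos)
        have "sgnok (((1 - 0 - d) *\<^sub>R p + 0 *\<^sub>R q + d *\<^sub>R r) - ((1 - (-d*k) - 0) *\<^sub>R p + (-d*k) *\<^sub>R q + 0 *\<^sub>R r))"
          by (rule ch[OF x2 x1])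
        moreover have "((1 - 0 - d) *\<^sub>R p + 0 *\<^sub>R q + d *\<^sub>R r) - ((1 - (-d*k) - 0) *\<^sub>R p + (-d*k) *\<^sub>R q + 0 *\<^sub>R r) = d *\<^sub>R (v + k *\<^sub>R u)"
          by (simp add: u_def v_def algebra_simps)
        ultimately show ?thesis using sgnok_scale d0 by metis
      qed
    qed
    obtain i where ui: "u $ i \<noteq> 0" using u0 by (metis vec_eq_iff zero_index)
    define l where "l = v $ i / u $ i"
    define w where "w = v - l *\<^sub>R u"
    have wi: "w $ i = 0" using ui by (simp add: w_def l_def)
    have "w = 0"
    proof (rule ccontr)
      assume "w \<noteq> 0"
      then obtain j where wj: "w $ j \<noteq> 0" by (metis vec_eq_iff zero_index)
      define \<rho> where "\<rho> = sg j * w $ j"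
      define \<tau> where "\<tau> = sg i * u $ i"
      define e where "e = \<tau> * (sg j * u $ j)"
      define \<theta> where "\<theta> = 1 / (2 * (\<bar>e\<bar> + 1))"
      define \<mu> where "\<mu> = - \<rho> * \<tau> * \<theta>"
      have \<rho>0: "\<rho> \<noteq> 0" using wj sg_ne by (simp add: \<rho>_def)
      have \<tau>0: "\<tau> \<noteq> 0" using ui sg_ne by (simp add: \<tau>_def)
      have \<theta>0: "0 < \<theta>" by (simp add: \<theta>_def add_pos_nonneg)
      have \<theta>e: "\<theta> * \<bar>e\<bar> < 1"
        by (simp add: \<theta>_def field_simps)
      have pos: "0 < 1 - \<theta> * e" using \<theta>e abs_ge_self[of e] \<theta>0
        by (smt (verit, ccfv_SIG) mult_left_mono)
      have z: "v + (\<mu> - l) *\<^sub>R u = w + \<mu> *\<^sub>R u" by (simp add: w_def algebra_simps)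
      have zi: "sg i * (w + \<mu> *\<^sub>R u) $ i = - \<rho> * (\<tau> * \<tau>) * \<theta>"
        using wi by (simp add: \<mu>_def \<tau>_def algebra_simps)
      have zj: "sg j * (w + \<mu> *\<^sub>R u) $ j = \<rho> * (1 - \<theta> * e)"
        by (simp add: \<mu>_def \<rho>_def e_def algebra_simps)
      have tt: "0 < \<tau> * \<tau>" using \<tau>0 by (cases "\<tau> > 0") (auto simp: mult_neg_neg)
      have "sgnok (w + \<mu> *\<^sub>R u)" using ok[of "\<mu> - l"] z by simp
      then have "(0 \<le> sg i * (w + \<mu> *\<^sub>R u) $ i \<and> 0 \<le> sg j * (w + \<mu> *\<^sub>R u) $ j) \<or>
                 (sg i * (w + \<mu> *\<^sub>R u) $ i \<le> 0 \<and> sg j * (w + \<mu> *\<^sub>R u) $ j \<le> 0)"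
        unfolding sgnok_def by blast
      then have "(0 \<le> - \<rho> * (\<tau> * \<tau>) * \<theta> \<and> 0 \<le> \<rho> * (1 - \<theta> * e)) \<or>
                 (- \<rho> * (\<tau> * \<tau>) * \<theta> \<le> 0 \<and> \<rho> * (1 - \<theta> * e) \<le> 0)"
        unfolding zi zj .
      moreover have "0 < \<rho> \<or> \<rho> < 0" using \<rho>0 by linarith
      ultimately show False using tt \<theta>0 pos
        by (auto simp: zero_le_mult_iff mult_le_0_iff)
    qed
    then have "r - p = l *\<^sub>R u" by (simp add: w_def v_def)
    then show ?thesis by blast
  qed
  show ?thesis unfolding collinear_def
  proof (intro exI[of _ u] ballI)
    fix x y assume "x \<in> S" "y \<in> S"
    then obtain lx ly where "x - p = lx *\<^sub>R u" "y - p = ly *\<^sub>R u" using key by blast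
    then have "x - y = (lx - ly) *\<^sub>R u" by (simp add: algebra_simps)
    then show "\<exists>c. x - y = c *\<^sub>R u" by blast
  qed
qed



lemma TD_nonneg: "f \<in> TD D \<Longrightarrow> 0 \<le> f $ i"
  by (auto simp: TD_def PD_def)

lemma gform:
  assumes f: "f \<in> TD D" and Df: "\<And>x y. D x y = max 0 (a y - b x)"
  shows "f $ Inl x = max 0 ((MAX y. a y - f $ Inr y) - b x)"
proof -
  define C where "C = (MAX y. a y - f $ Inr y)"
  have hn: "\<And>y. 0 \<le> f $ Inr y" using TD_nonneg[OF f] by blast
  have "gst D (\<lambda>y. f $ Inr y) x = max 0 (C - b x)"
  proof (rule antisym)
    show "gst D (\<lambda>y. f $ Inr y) x \<le> max 0 (C - b x)"
    proof (rule gst_le)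
      fix y
      have "a y - f $ Inr y \<le> C" unfolding C_def by (rule maxr_ge)
      then show "D x y - f $ Inr y \<le> max 0 (C - b x)" using hn[of y] Df[of x y] by linarith
    qed simp
    obtain y0 where y0: "C = a y0 - f $ Inr y0" unfolding C_def using maxr_ex by blast
    have "C - b x \<le> D x y0 - f $ Inr y0" using y0 Df[of x y0] by linarith
    also have "\<dots> \<le> gst D (\<lambda>y. f $ Inr y) x" by (rule gst_ge)
    finally show "max 0 (C - b x) \<le> gst D (\<lambda>y. f $ Inr y) x" using gst_nonneg by simp
  qed
  then show ?thesis using TD_char(1)[OF f, of x] by (simp add: C_def)
qed

lemma TD_chain_form:
  assumes f: "f \<in> TD D" and f': "f' \<in> TD D" and Df: "\<And>x y. D x y = max 0 (a y - b x)"
  shows "sgnok (f' - f)"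
proof -
  define C where "C = (MAX y. a y - f $ Inr y)"
  define C' where "C' = (MAX y. a y - f' $ Inr y)"
  have g: "\<And>x. f $ Inl x = max 0 (C - b x)" unfolding C_def by (rule gform[OF f Df])
  have g': "\<And>x. f' $ Inl x = max 0 (C' - b x)" unfolding C'_def by (rule gform[OF f' Df])
  show ?thesis
  proof (cases "C \<le> C'")
    case True
    then have le: "\<And>x. f $ Inl x \<le> f' $ Inl x" using g g' by (simp add: max_def)
    have "f' $ Inr y \<le> f $ Inr y" for y
      unfolding TD_char(2)[OF f, of y] TD_char(2)[OF f', of y] by (rule hst_anti) (rule le)
    then have "\<forall>i. 0 \<le> sg i * (f' - f) $ i" using le by (auto simp: sg_def split: sum.split)
    then show ?thesis by (simp add: sgnok_def)
  next
    case False
    then have le: "\<And>x. f' $ Inl x \<le> f $ Inl x" using g g' by (simp add: max_def)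
    have "f $ Inr y \<le> f' $ Inr y" for y
      unfolding TD_char(2)[OF f, of y] TD_char(2)[OF f', of y] by (rule hst_anti) (rule le)
    then have "\<forall>i. sg i * (f' - f) $ i \<le> 0" using le by (auto simp: sg_def split: sum.split)
    then show ?thesis by (simp add: sgnok_def)
  qed
qed

lemma form_tree:
  assumes Df: "\<And>x y. D x y = max 0 (a y - b x)"
  shows "tight_span_is_tree D"
  unfolding tight_span_is_tree_def
proof (intro allI impI)
  fix S assume "convex S \<and> S \<subseteq> TD D"
  then have "collinear S"
    by (intro chain_collinear) (auto intro: TD_chain_form[OF _ _ Df])
  then show "aff_dim S \<le> 1" by (simp add: collinear_aff_dim)
qed



definition comparable_gammas :: "('a::finite \<Rightarrow> 'a \<Rightarrow> real) \<Rightarrow> bool" where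
  "comparable_gammas D \<longleftrightarrow> (\<forall>y w c d. 0 \<le> c \<longrightarrow> 0 \<le> d \<longrightarrow>
     (\<forall>z. max 0 (D z y - c) \<le> max 0 (D z w - d)) \<or> (\<forall>z. max 0 (D z w - d) \<le> max 0 (D z y - c)))"

lemma comp_key:
  assumes dd: "directed_distance D" and cg: "comparable_gammas D" and pos: "0 < D x y"
  shows "D z' w - D x w \<le> max 0 (D z' y - D x y)"
proof (rule ccontr)
  assume "\<not> ?thesis"
  then have gp: "0 < D z' w - D x w - max 0 (D z' y - D x y)" by linarith
  define gap where "gap = D z' w - D x w - max 0 (D z' y - D x y)"
  define e where "e = min (D x y) gap / 2"
  have e0: "0 < e" using pos gp by (simp add: e_def gap_def)
  have eD: "e < D x y" "e < gap" using pos gp unfolding e_def gap_def[symmetric] by (auto simp: min_def)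
  have d0: "0 \<le> D x w" using dd by (simp add: directed_distance_def)
  from cg[unfolded comparable_gammas_def, rule_format, of "D x y - e" "D x w" y w] eD d0
  have "(\<forall>z. max 0 (D z y - (D x y - e)) \<le> max 0 (D z w - D x w)) \<or>
        (\<forall>z. max 0 (D z w - D x w) \<le> max 0 (D z y - (D x y - e)))" by simp
  then show False
  proof
    assume "\<forall>z. max 0 (D z y - (D x y - e)) \<le> max 0 (D z w - D x w)"
    then have "max 0 (D x y - (D x y - e)) \<le> max 0 (D x w - D x w)" by blast
    then show False using e0 by simp
  next
    assume "\<forall>z. max 0 (D z w - D x w) \<le> max 0 (D z y - (D x y - e))"
    then have "max 0 (D z' w - D x w) \<le> max 0 (D z' y - (D x y - e))" by blast
    then show False using eD e0 gp unfolding gap_def by (simp add: max_def split: if_splits)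
  qed
qed

definition aa :: "('a::finite \<Rightarrow> 'a \<Rightarrow> real) \<Rightarrow> 'a \<Rightarrow> real" where
  "aa D y = (MAX z. D z y)"
definition bb :: "('a::finite \<Rightarrow> 'a \<Rightarrow> real) \<Rightarrow> 'a \<Rightarrow> real" where
  "bb D x = (MAX z. MAX w. D z w - D x w)"

lemma aa_le_bb:
  assumes dd: "directed_distance D"
  shows "aa D x \<le> bb D x"
proof -
  obtain z where z: "aa D x = D z x" unfolding aa_def using maxr_ex by blast
  have "D z x - D x x \<le> (MAX w. D z w - D x w)" by (rule maxr_ge)
  also have "\<dots> \<le> bb D x" unfolding bb_def by (rule maxr_ge)
  finally show ?thesis using z dd by (simp add: directed_distance_def)
qed

lemma comp_form:
  assumes dd: "directed_distance D" and cg: "comparable_gammas D"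
  shows "D x y = max 0 (aa D y - bb D x)"
proof -
  have Dn: "0 \<le> D x y" using dd by (simp add: directed_distance_def)
  obtain z0 where z0: "aa D y = D z0 y" unfolding aa_def using maxr_ex by blast
  have "D z0 y - D x y \<le> (MAX w. D z0 w - D x w)" by (rule maxr_ge)
  also have "\<dots> \<le> bb D x" unfolding bb_def by (rule maxr_ge)
  finally have le1: "aa D y - bb D x \<le> D x y" using z0 by simp
  show ?thesis
  proof (cases "D x y = 0")
    case True then show ?thesis using le1 by simp
  next
    case False
    then have pos: "0 < D x y" using Dn by simp
    obtain z' where z': "bb D x = (MAX w. D z' w - D x w)" unfolding bb_def using maxr_ex by blast
    obtain w where w: "(MAX w. D z' w - D x w) = D z' w - D x w" using maxr_ex by blast
    have "bb D x \<le> max 0 (D z' y - D x y)" using z' w comp_key[OF dd cg pos] by simp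
    moreover have "D z' y \<le> aa D y" unfolding aa_def by (rule maxr_ge)
    moreover have "D x y \<le> aa D y" unfolding aa_def by (rule maxr_ge)
    ultimately have "D x y \<le> aa D y - bb D x" by linarith
    then show ?thesis using le1 pos by linarith
  qed
qed



lemma dom_ineq:
  fixes b c b' c' s t :: real
  assumes "c' \<le> c" "b' + c' \<le> b + c" "0 \<le> s" "s \<le> t"
  shows "b' * s + c' * t \<le> b * s + c * t"
proof -
  have "(b' + c') * s \<le> (b + c) * s" using assms by (intro mult_right_mono) auto
  moreover have "c' * (t - s) \<le> c * (t - s)" using assms by (intro mult_right_mono) auto
  ultimately show ?thesis by (simp add: algebra_simps)
qed

lemma small_ineq:
  fixes p q s t e K :: real
  assumes "0 \<le> s" "s \<le> t" "t \<le> e" "0 < e" "e * (\<bar>p\<bar> + \<bar>q\<bar> + 1) \<le> K"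
  shows "p * s + q * t \<le> K"
proof -
  have "p * s \<le> \<bar>p\<bar> * e" using assms
    by (smt (verit, ccfv_SIG) abs_ge_self abs_ge_minus_self mult_mono mult_left_mono mult_nonneg_nonneg abs_ge_zero abs_mult mult_right_mono)
  moreover have "q * t \<le> \<bar>q\<bar> * e" using assms
    by (smt (verit, ccfv_SIG) abs_ge_self abs_ge_minus_self mult_mono mult_left_mono mult_nonneg_nonneg abs_ge_zero abs_mult mult_right_mono)
  ultimately show ?thesis using assms by (simp add: algebra_simps)
qed

lemma max_affine:
  fixes I :: "'i set" and a b c :: "'i \<Rightarrow> real"
  assumes fin: "finite I" and ne: "I \<noteq> {}"
    and tot: "\<And>i j. i \<in> I \<Longrightarrow> j \<in> I \<Longrightarrow> (c j \<le> c i \<and> b j + c j \<le> b i + c i) \<or> (c i \<le> c j \<and> b i + c i \<le> b j + c j)"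
  shows "\<exists>i0\<in>I. \<exists>e>0. \<forall>i\<in>I. \<forall>s t. 0 \<le> s \<longrightarrow> s \<le> t \<longrightarrow> t \<le> e \<longrightarrow>
           a i + b i * s + c i * t \<le> a i0 + b i0 * s + c i0 * t"
proof -
  define A where "A = Max (a ` I)"
  define M where "M = {i\<in>I. a i = A}"
  have "A \<in> a ` I" unfolding A_def using fin ne by (intro Max_in) auto
  then have Mne: "M \<noteq> {}" by (auto simp: M_def)
  have Mfin: "finite M" using fin by (simp add: M_def)
  define \<phi> where "\<phi> i = 2 * c i + b i" for i
  have "Max (\<phi> ` M) \<in> \<phi> ` M" using Mfin Mne by (intro Max_in) auto
  then obtain i0 where i0M: "i0 \<in> M" and i0max: "\<phi> i0 = Max (\<phi> ` M)" by auto
  have phile: "\<phi> i \<le> \<phi> i0" if "i \<in> M" for i using i0max that Mfin by simp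
  have i0I: "i0 \<in> I" and ai0: "a i0 = A" using i0M by (auto simp: M_def)
  have Age: "a i \<le> A" if "i \<in> I" for i unfolding A_def using fin that by simp
  have domM: "c i \<le> c i0 \<and> b i + c i \<le> b i0 + c i0" if "i \<in> M" for i
  proof -
    have iI: "i \<in> I" using that by (simp add: M_def)
    from tot[OF i0I iI] phile[OF that] show ?thesis unfolding \<phi>_def by linarith
  qed
  define L where "L = {i\<in>I. a i < A}"
  define e where "e = Min (insert 1 ((\<lambda>i. (A - a i) / (\<bar>b i - b i0\<bar> + \<bar>c i - c i0\<bar> + 1)) ` L))"
  have Lfin: "finite L" using fin by (simp add: L_def)
  have e0: "0 < e" unfolding e_def using Lfin
    by (subst Min_gr_iff) (auto simp: L_def intro!: divide_pos_pos add_nonneg_pos)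
  have eL: "e \<le> (A - a i) / (\<bar>b i - b i0\<bar> + \<bar>c i - c i0\<bar> + 1)" if "i \<in> L" for i
    unfolding e_def using Lfin that by (intro Min_le) auto
  show ?thesis
  proof (intro bexI[OF _ i0I] exI[of _ e] conjI e0 ballI allI impI)
    fix i s t assume iI: "i \<in> I" and s: "0 \<le> s" and st: "s \<le> t" and te: "t \<le> e"
    show "a i + b i * s + c i * t \<le> a i0 + b i0 * s + c i0 * t"
    proof (cases "a i = A")
      case True
      then have "i \<in> M" using iI by (simp add: M_def)
      from domM[OF this] have "b i * s + c i * t \<le> b i0 * s + c i0 * t"
        using s st by (intro dom_ineq) auto
      then show ?thesis using True ai0 by simp
    next
      case False
      then have iL: "i \<in> L" using Age[OF iI] iI by (simp add: L_def)
      have K: "0 < \<bar>b i - b i0\<bar> + \<bar>c i - c i0\<bar> + 1" by (simp add: add_nonneg_pos)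
      have "e * (\<bar>b i - b i0\<bar> + \<bar>c i - c i0\<bar> + 1) \<le> A - a i"
        using eL[OF iL] K by (simp add: pos_le_divide_eq)
      then have "(b i - b i0) * s + (c i - c i0) * t \<le> A - a i"
        using s st te e0 by (intro small_ineq) auto
      then show ?thesis using ai0 by (simp add: algebra_simps)
    qed
  qed
qed



lemma max0_Max_eq:
  fixes g :: "'a::finite \<Rightarrow> real"
  assumes "0 \<le> v" "\<And>z. g z \<le> v" "v = 0 \<or> (\<exists>z. g z = v)"
  shows "max 0 (MAX z. g z) = v"
proof -
  have "(MAX z. g z) \<le> v" by (rule maxr_le) (rule assms(2))
  moreover have "v = 0 \<or> v \<le> (MAX z. g z)" using assms(3) maxr_ge[of g] by auto
  ultimately show ?thesis using assms(1) by linarith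
qed

lemma choice2:
  assumes "\<forall>x. \<exists>i e. P x i e"
  shows "\<exists>I E. \<forall>x. P x (I x) (E x)"
proof -
  from assms have "\<forall>x. \<exists>p. P x (fst p) (snd p)" by auto
  from choice[OF this] obtain f where "\<forall>x. P x (fst (f x)) (snd (f x))" by blast
  then show ?thesis by (intro exI[of _ "\<lambda>x. fst (f x)"] exI[of _ "\<lambda>x. snd (f x)"]) simp
qed

lemma tree_comp:
  assumes dd: "directed_distance D" and tr: "tight_span_is_tree D"
  shows "comparable_gammas D"
  unfolding comparable_gammas_def
proof (intro allI impI)
  fix y w and c d :: real
  assume c0: "0 \<le> c" and d0: "0 \<le> d"
  define g1 where "g1 z = max 0 (D z y - c)" for z
  define g2 where "g2 z = max 0 (D z w - d)" for z
  show "(\<forall>z. max 0 (D z y - c) \<le> max 0 (D z w - d)) \<or> (\<forall>z. max 0 (D z w - d) \<le> max 0 (D z y - c))"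
  proof (rule ccontr)
    assume "\<not> ?thesis"
    then have n1: "\<not> (\<forall>z. g1 z \<le> g2 z)" and n2: "\<not> (\<forall>z. g2 z \<le> g1 z)"
      unfolding g1_def g2_def by blast+
    from n1 obtain j where j: "g2 j < g1 j" by (auto simp: not_le)
    from n2 obtain k where k: "g1 k < g2 k" by (auto simp: not_le)
    have yw: "y \<noteq> w"
    proof
      assume "y = w"
      show False
      proof (cases "c \<le> d")
        case True
        have "g2 k \<le> g1 k" unfolding g1_def g2_def using True \<open>y = w\<close> by (intro max.mono) auto
        then show False using k by simp
      next
        case False
        have "g1 j \<le> g2 j" unfolding g1_def g2_def using False \<open>y = w\<close> by (intro max.mono) auto
        then show False using j by simp
      qed
    qed
    have Dn: "\<And>x y. 0 \<le> D x y" using dd by (simp add: directed_distance_def)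
    define F where "F s t z = max 0 (max (D z y - c - s) (D z w - d - t))" for s t :: real and z
    define Mx where "Mx = (MAX z. MAX y'. D z y')"
    have DMx: "D z y' \<le> Mx" for z y'
      unfolding Mx_def using maxr_ge[of "\<lambda>y'. D z y'" y'] maxr_ge[of "\<lambda>z. MAX y'. D z y'" z] by linarith
    define h0 where "h0 s t y' = (if y' = y then c + s else if y' = w then d + t else Mx)" for s t :: real and y'
    have h0n: "0 \<le> h0 s t y'" if "0 \<le> s" "0 \<le> t" for s t y'
      using that c0 d0 DMx[of y' y'] Dn[of y' y'] by (simp add: h0_def)
    have gh0: "gst D (h0 s t) = F s t" if "0 \<le> s" "0 \<le> t" for s t
    proof (rule ext, rule antisym)
      fix z
      show "gst D (h0 s t) z \<le> F s t z"
      proof (rule gst_le)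
        fix y' show "D z y' - h0 s t y' \<le> F s t z"
          using yw DMx[of z y'] unfolding h0_def F_def by auto
      qed (simp add: F_def)
      have "D z y - c - s \<le> gst D (h0 s t) z" using gst_ge[of D z y "h0 s t"] by (simp add: h0_def)
      moreover have "D z w - d - t \<le> gst D (h0 s t) z" using gst_ge[of D z w "h0 s t"] yw by (simp add: h0_def)
      ultimately show "F s t z \<le> gst D (h0 s t) z" using gst_nonneg[of D "h0 s t" z] by (simp add: F_def)
    qed
    define P where "P s t = mk (F s t) (hst D (F s t))" for s t
    have PTD: "P s t \<in> TD D" if "0 \<le> s" "0 \<le> t" for s t
      using TD_from_h[of "h0 s t" D] h0n[OF that] gh0[OF that] by (simp add: P_def)
    define a1 where "a1 z i = (if i = 0 then 0 else if i = (1::nat) then D z y - c else D z w - d)" for z i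
    define b1 where "b1 i = (if i = (1::nat) then -1 else 0::real)" for i
    define c1 where "c1 i = (if i = (2::nat) then -1 else 0::real)" for i
    have st1: "\<exists>i0\<in>{0,1,2}. \<exists>e>0. \<forall>i\<in>{0,1,2}. \<forall>s t. 0 \<le> s \<longrightarrow> s \<le> t \<longrightarrow> t \<le> e \<longrightarrow>
           a1 z i + b1 i * s + c1 i * t \<le> a1 z i0 + b1 i0 * s + c1 i0 * t" for z
      by (rule max_affine) (auto simp: b1_def c1_def)
    then have "\<forall>z. \<exists>i0 e. i0 \<in> {0,1,2} \<and> 0 < e \<and> (\<forall>i\<in>{0,1,2}. \<forall>s t. 0 \<le> s \<longrightarrow> s \<le> t \<longrightarrow> t \<le> e \<longrightarrow>
           a1 z i + b1 i * s + c1 i * t \<le> a1 z i0 + b1 i0 * s + c1 i0 * t)" by blast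
    from choice2[OF this] obtain I0 E1 where HH: "\<forall>z. I0 z \<in> {0,1,2} \<and> 0 < E1 z \<and> (\<forall>i\<in>{0,1,2}. \<forall>s t. 0 \<le> s \<longrightarrow> s \<le> t \<longrightarrow> t \<le> E1 z \<longrightarrow>
           a1 z i + b1 i * s + c1 i * t \<le> a1 z (I0 z) + b1 (I0 z) * s + c1 (I0 z) * t)" by blast
    have I0: "\<And>z. I0 z \<in> {0,1,2}" and E1: "\<And>z. 0 < E1 z" using HH by blast+
    have H1: "\<And>z i s t. i \<in> {0,1,2} \<Longrightarrow> 0 \<le> s \<Longrightarrow> s \<le> t \<Longrightarrow> t \<le> E1 z \<Longrightarrow>
           a1 z i + b1 i * s + c1 i * t \<le> a1 z (I0 z) + b1 (I0 z) * s + c1 (I0 z) * t"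
      using HH by blast
    define e1 where "e1 = Min (range E1)"
    have e1p: "0 < e1" unfolding e1_def using E1 by (subst Min_gr_iff) auto
    have e1le: "e1 \<le> E1 z" for z unfolding e1_def by (rule Min_le) auto
    have Faff: "F s t z = a1 z (I0 z) + b1 (I0 z) * s + c1 (I0 z) * t"
      if "0 \<le> s" "s \<le> t" "t \<le> e1" for s t z
    proof -
      have tE: "t \<le> E1 z" using that e1le[of z] by linarith
      have h0': "a1 z 0 + b1 0 * s + c1 0 * t \<le> a1 z (I0 z) + b1 (I0 z) * s + c1 (I0 z) * t"
        and h1': "a1 z 1 + b1 1 * s + c1 1 * t \<le> a1 z (I0 z) + b1 (I0 z) * s + c1 (I0 z) * t"
        and h2': "a1 z 2 + b1 2 * s + c1 2 * t \<le> a1 z (I0 z) + b1 (I0 z) * s + c1 (I0 z) * t"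
        using H1[OF _ that(1,2) tE] by auto
      have e0: "a1 z 0 + b1 0 * s + c1 0 * t = 0" by (simp add: a1_def b1_def c1_def)
      have e1: "a1 z 1 + b1 1 * s + c1 1 * t = D z y - c - s" by (simp add: a1_def b1_def c1_def)
      have e2: "a1 z 2 + b1 2 * s + c1 2 * t = D z w - d - t" by (simp add: a1_def b1_def c1_def)
      have "F s t z = max (a1 z 0 + b1 0 * s + c1 0 * t) (max (a1 z 1 + b1 1 * s + c1 1 * t) (a1 z 2 + b1 2 * s + c1 2 * t))"
        unfolding F_def e0 e1 e2 ..
      also have "\<dots> = a1 z (I0 z) + b1 (I0 z) * s + c1 (I0 z) * t"
        using I0[of z] h0' h1' h2' by (elim insertE) (auto simp: max_def)
      finally show ?thesis .
    qed
    define Af where "Af z = a1 z (I0 z)" for z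
    define Bf where "Bf z = b1 (I0 z)" for z
    define Cf where "Cf z = c1 (I0 z)" for z
    have kinds: "(Bf z = 0 \<and> Cf z = 0) \<or> (Bf z = -1 \<and> Cf z = 0) \<or> (Bf z = 0 \<and> Cf z = -1)" for z
      using I0[of z] by (auto simp: Bf_def Cf_def b1_def c1_def)
    define a2 where "a2 y' i = (case i of None \<Rightarrow> 0 | Some z \<Rightarrow> D z y' - Af z)" for y' i
    define b2 where "b2 i = (case i of None \<Rightarrow> 0 | Some z \<Rightarrow> - Bf z)" for i
    define c2 where "c2 i = (case i of None \<Rightarrow> 0 | Some z \<Rightarrow> - Cf z)" for i
    have st2: "\<exists>i0\<in>(UNIV :: 'a option set). \<exists>e>0. \<forall>i\<in>UNIV. \<forall>s t. 0 \<le> s \<longrightarrow> s \<le> t \<longrightarrow> t \<le> e \<longrightarrow>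
           a2 y' i + b2 i * s + c2 i * t \<le> a2 y' i0 + b2 i0 * s + c2 i0 * t" for y'
    proof (rule max_affine)
      fix i j :: "'a option"
      show "(c2 j \<le> c2 i \<and> b2 j + c2 j \<le> b2 i + c2 i) \<or> (c2 i \<le> c2 j \<and> b2 i + c2 i \<le> b2 j + c2 j)"
      proof -
        have kk: "(b2 i = 0 \<and> c2 i = 0) \<or> (b2 i = 1 \<and> c2 i = 0) \<or> (b2 i = 0 \<and> c2 i = 1)" for i
          using kinds unfolding b2_def c2_def by (cases i) auto
        show ?thesis using kk[of i] kk[of j] by auto
      qed
    qed auto
    have "\<forall>y'. \<exists>p. 0 < snd p \<and> (\<forall>i s t. 0 \<le> s \<longrightarrow> s \<le> t \<longrightarrow> t \<le> snd p \<longrightarrow>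
           a2 y' i + b2 i * s + c2 i * t \<le> a2 y' (fst p) + b2 (fst p) * s + c2 (fst p) * t)"
    proof
      fix y' from st2[of y'] obtain i0 e where "0 < e" and "\<forall>i s t. 0 \<le> s \<longrightarrow> s \<le> t \<longrightarrow> t \<le> e \<longrightarrow>
           a2 y' i + b2 i * s + c2 i * t \<le> a2 y' i0 + b2 i0 * s + c2 i0 * t" by blast
      then show "\<exists>p. 0 < snd p \<and> (\<forall>i s t. 0 \<le> s \<longrightarrow> s \<le> t \<longrightarrow> t \<le> snd p \<longrightarrow>
           a2 y' i + b2 i * s + c2 i * t \<le> a2 y' (fst p) + b2 (fst p) * s + c2 (fst p) * t)"
        by (intro exI[of _ "(i0, e)"]) simp
    qed
    from choice[OF this] obtain pp where pp: "\<forall>y'. 0 < snd (pp y') \<and> (\<forall>i s t. 0 \<le> s \<longrightarrow> s \<le> t \<longrightarrow> t \<le> snd (pp y') \<longrightarrow>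
           a2 y' i + b2 i * s + c2 i * t \<le> a2 y' (fst (pp y')) + b2 (fst (pp y')) * s + c2 (fst (pp y')) * t)"
      by blast
    define I2 where "I2 y' = fst (pp y')" for y'
    define E2 where "E2 y' = snd (pp y')" for y'
    have E2: "\<And>y'. 0 < E2 y'" using pp by (simp add: E2_def)
    have H2: "\<And>y' i s t. 0 \<le> s \<Longrightarrow> s \<le> t \<Longrightarrow> t \<le> E2 y' \<Longrightarrow>
           a2 y' i + b2 i * s + c2 i * t \<le> a2 y' (I2 y') + b2 (I2 y') * s + c2 (I2 y') * t"
      using pp unfolding I2_def E2_def by blast
    define e2 where "e2 = Min (range E2)"
    have e2p: "0 < e2" unfolding e2_def using E2 by (subst Min_gr_iff) auto
    have e2le: "e2 \<le> E2 y'" for y' unfolding e2_def by (rule Min_le) auto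
    have Haff: "hst D (F s t) y' = a2 y' (I2 y') + b2 (I2 y') * s + c2 (I2 y') * t"
      if "0 \<le> s" "s \<le> t" "t \<le> e1" "t \<le> e2" for s t y'
    proof -
      have tE: "t \<le> E2 y'" using that e2le[of y'] by linarith
      have T: "D z y' - F s t z = a2 y' (Some z) + b2 (Some z) * s + c2 (Some z) * t" for z
        using Faff[OF that(1-3), of z] by (simp add: a2_def b2_def c2_def Af_def Bf_def Cf_def)
      have T0: "0 = a2 y' None + b2 None * s + c2 None * t" by (simp add: a2_def b2_def c2_def)
      have le: "a2 y' i + b2 i * s + c2 i * t \<le> a2 y' (I2 y') + b2 (I2 y') * s + c2 (I2 y') * t" for i
        by (rule H2[OF that(1,2) tE])
      show ?thesis unfolding hst_def
      proof (rule max0_Max_eq)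
        show "0 \<le> a2 y' (I2 y') + b2 (I2 y') * s + c2 (I2 y') * t" using le[of None] T0 by linarith
        fix z show "D z y' - F s t z \<le> a2 y' (I2 y') + b2 (I2 y') * s + c2 (I2 y') * t"
          using le[of "Some z"] T[of z] by linarith
      next
        show "a2 y' (I2 y') + b2 (I2 y') * s + c2 (I2 y') * t = 0 \<or>
          (\<exists>z. D z y' - F s t z = a2 y' (I2 y') + b2 (I2 y') * s + c2 (I2 y') * t)"
          using T T0 by (cases "I2 y'") auto
      qed
    qed
    define eg where "eg = min (g1 j - g2 j) (g2 k - g1 k) / 2"
    define \<epsilon> where "\<epsilon> = min (min e1 e2) eg"
    have egp: "0 < eg" using j k by (simp add: eg_def)
    have \<epsilon>p: "0 < \<epsilon>" using e1p e2p egp by (simp add: \<epsilon>_def)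
    have \<epsilon>j: "\<epsilon> < g1 j - g2 j" and \<epsilon>k: "\<epsilon> < g2 k - g1 k" using j k egp
      unfolding \<epsilon>_def eg_def by (auto simp: min_def)
    have e1e: "\<epsilon> \<le> e1" and e2e: "\<epsilon> \<le> e2" by (simp_all add: \<epsilon>_def)
    have aff: "\<exists>A B C. \<forall>s t. 0 \<le> s \<longrightarrow> s \<le> t \<longrightarrow> t \<le> \<epsilon> \<longrightarrow> P s t $ i = A + B * s + C * t" for i
    proof (cases i)
      case (Inl z)
      show ?thesis
      proof (intro exI allI impI)
        fix s t :: real assume r: "0 \<le> s" "s \<le> t" "t \<le> \<epsilon>"
        have "t \<le> e1" using r e1e by linarith
        from Faff[OF r(1,2) this, of z]
        show "P s t $ i = Af z + Bf z * s + Cf z * t" by (simp add: Inl P_def Af_def Bf_def Cf_def)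
      qed
    next
      case (Inr y')
      show ?thesis
      proof (intro exI allI impI)
        fix s t :: real assume r: "0 \<le> s" "s \<le> t" "t \<le> \<epsilon>"
        have "t \<le> e1" "t \<le> e2" using r e1e e2e by linarith+
        from Haff[OF r(1,2) this, of y']
        show "P s t $ i = a2 y' (I2 y') + b2 (I2 y') * s + c2 (I2 y') * t" by (simp add: Inr P_def)
      qed
    qed
    define S where "S = {P s t | s t. 0 \<le> s \<and> s \<le> t \<and> t \<le> \<epsilon>}"
    have cS: "convex S"
      unfolding convex_def
    proof (intro ballI allI impI)
      fix x x' :: "real ^ ('a + 'a)" and u v :: real
      assume xS: "x \<in> S" and x'S: "x' \<in> S" and uv0: "0 \<le> u" "0 \<le> v" "u + v = 1"
      have uv: "0 \<le> u \<and> 0 \<le> v \<and> u + v = 1" using uv0 by simp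
      from xS x'S obtain s1 t1 s2 t2 where x: "x = P s1 t1" and r1: "0 \<le> s1" "s1 \<le> t1" "t1 \<le> \<epsilon>"
        and x': "x' = P s2 t2" and r2: "0 \<le> s2" "s2 \<le> t2" "t2 \<le> \<epsilon>"
        unfolding S_def by blast
      have rs: "0 \<le> u * s1 + v * s2" using r1 r2 uv by simp
      have rst: "u * s1 + v * s2 \<le> u * t1 + v * t2" using r1 r2 uv
        by (intro add_mono mult_left_mono) auto
      have rt: "u * t1 + v * t2 \<le> \<epsilon>"
      proof -
        have "u * t1 + v * t2 \<le> u * \<epsilon> + v * \<epsilon>" using r1 r2 uv by (intro add_mono mult_left_mono) auto
        moreover have "u * \<epsilon> + v * \<epsilon> = (u + v) * \<epsilon>" by (simp add: distrib_right)
        ultimately show ?thesis using uv by simp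
      qed
      have "u *\<^sub>R x + v *\<^sub>R x' = P (u * s1 + v * s2) (u * t1 + v * t2)"
      proof (rule vec_eq_iff[THEN iffD2], rule allI)
        fix i
        obtain A B C where ABC: "\<And>s t. 0 \<le> s \<Longrightarrow> s \<le> t \<Longrightarrow> t \<le> \<epsilon> \<Longrightarrow> P s t $ i = A + B * s + C * t"
          using aff[of i] by blast
        have "(u *\<^sub>R x + v *\<^sub>R x') $ i = u * (A + B * s1 + C * t1) + v * (A + B * s2 + C * t2)"
          using ABC[OF r1] ABC[OF r2] x x' by simp
        also have "\<dots> = (u + v) * A + B * (u * s1 + v * s2) + C * (u * t1 + v * t2)"
          by (simp add: algebra_simps)
        also have "\<dots> = P (u * s1 + v * s2) (u * t1 + v * t2) $ i"
          using ABC[OF rs rst rt] uv by simp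
        finally show "(u *\<^sub>R x + v *\<^sub>R x') $ i = P (u * s1 + v * s2) (u * t1 + v * t2) $ i" .
      qed
      then show "u *\<^sub>R x + v *\<^sub>R x' \<in> S" unfolding S_def using rs rst rt by blast
    qed
    have sS: "S \<subseteq> TD D" unfolding S_def using PTD by auto
    have "aff_dim S \<le> 1" using tr cS sS unfolding tight_span_is_tree_def by blast
    then have col: "collinear S" by (simp add: collinear_aff_dim)
    have memS: "P s t \<in> S" if "0 \<le> s" "s \<le> t" "t \<le> \<epsilon>" for s t
      unfolding S_def using that by blast
    have p1: "P 0 0 \<in> S" and p2: "P 0 \<epsilon> \<in> S" and p3: "P \<epsilon> \<epsilon> \<in> S"
      using \<epsilon>p by (auto intro!: memS)
    have g2n: "0 \<le> g2 j" unfolding g2_def by simp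
    have g1n: "0 \<le> g1 k" unfolding g1_def by simp
    have g1j: "0 < g1 j" using j g2n by linarith
    have g2k: "0 < g2 k" using k g1n by linarith
    have Aj: "D j y - c = g1 j" using g1j unfolding g1_def by (simp add: max_def split: if_splits)
    have Bj: "D j w - d \<le> g2 j" unfolding g2_def by simp
    have Ak: "D k w - d = g2 k" using g2k unfolding g2_def by (simp add: max_def split: if_splits)
    have Bk: "D k y - c \<le> g1 k" unfolding g1_def by simp
    have Fj: "F s t j = max 0 (max (g1 j - s) (D j w - d - t))" for s t
      unfolding F_def using Aj by simp
    have Fk: "F s t k = max 0 (max (D k y - c - s) (g2 k - t))" for s t
      unfolding F_def using Ak by simp
    have v1j: "P 0 0 $ Inl j = g1 j" and v2j: "P 0 \<epsilon> $ Inl j = g1 j" and v3j: "P \<epsilon> \<epsilon> $ Inl j = g1 j - \<epsilon>"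
      unfolding P_def mk_Inl Fj using j Bj g1j g2n \<epsilon>j \<epsilon>p by (simp_all add: max_def)
    have v1k: "P 0 0 $ Inl k = g2 k" and v2k: "P 0 \<epsilon> $ Inl k = g2 k - \<epsilon>" and v3k: "P \<epsilon> \<epsilon> $ Inl k = g2 k - \<epsilon>"
      unfolding P_def mk_Inl Fk using k Bk g2k g1n \<epsilon>k \<epsilon>p by (simp_all add: max_def)
    from col obtain u where u: "\<And>x x'. x \<in> S \<Longrightarrow> x' \<in> S \<Longrightarrow> \<exists>r. x - x' = r *\<^sub>R u"
      unfolding collinear_def by blast
    obtain r1 where r1: "P 0 \<epsilon> - P 0 0 = r1 *\<^sub>R u" using u[OF p2 p1] by blast
    obtain r2 where r2: "P \<epsilon> \<epsilon> - P 0 \<epsilon> = r2 *\<^sub>R u" using u[OF p3 p2] by blast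
    have "(P 0 \<epsilon> - P 0 0) $ Inl j = r1 * u $ Inl j" using r1 by simp
    then have a: "r1 * u $ Inl j = 0" using v1j v2j by simp
    have "(P 0 \<epsilon> - P 0 0) $ Inl k = r1 * u $ Inl k" using r1 by simp
    then have b: "r1 * u $ Inl k = - \<epsilon>" using v1k v2k by simp
    have "(P \<epsilon> \<epsilon> - P 0 \<epsilon>) $ Inl j = r2 * u $ Inl j" using r2 by simp
    then have c': "r2 * u $ Inl j = - \<epsilon>" using v2j v3j by simp
    have "(P \<epsilon> \<epsilon> - P 0 \<epsilon>) $ Inl k = r2 * u $ Inl k" using r2 by simp
    then have d': "r2 * u $ Inl k = 0" using v2k v3k by simp
    from a b c' d' \<epsilon>p show False by auto
  qed
qed



definition pedges :: "nat list \<Rightarrow> (nat \<times> nat) set" where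
  "pedges p = {(p ! i, p ! Suc i) | i. Suc i < length p}"

lemma sum_shift_lt: fixes n i :: nat shows "(\<Sum>k<n. f (i + k)) = (\<Sum>l<i + n. f l) - (\<Sum>l<i. (f l :: real))"
  by (induction n) auto

lemma fwd_upath:
  assumes d: "distinct p" and ij: "i \<le> j" "j < length p"
  shows "upath (pedges p) (map (\<lambda>k. p ! (i + k)) [0..<Suc (j - i)]) (p ! i) (p ! j)"
  unfolding upath_def
proof (intro conjI allI impI)
  show "map (\<lambda>k. p ! (i + k)) [0..<Suc (j - i)] \<noteq> []" by simp
  show "hd (map (\<lambda>k. p ! (i + k)) [0..<Suc (j - i)]) = p ! i" by (simp add: upt_conv_Cons del: upt_Suc)
  show "last (map (\<lambda>k. p ! (i + k)) [0..<Suc (j - i)]) = p ! j" using ij by (simp add: last_map)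
  show "distinct (map (\<lambda>k. p ! (i + k)) [0..<Suc (j - i)])"
    using d ij by (auto simp: distinct_map inj_on_def nth_eq_iff_index_eq)
  fix k assume k: "Suc k < length (map (\<lambda>k. p ! (i + k)) [0..<Suc (j - i)])"
  then have "Suc (i + k) < length p" using ij by simp
  then have "(p ! (i + k), p ! Suc (i + k)) \<in> pedges p" unfolding pedges_def by blast
  then show "uadj (pedges p) (map (\<lambda>k. p ! (i + k)) [0..<Suc (j - i)] ! k) (map (\<lambda>k. p ! (i + k)) [0..<Suc (j - i)] ! Suc k)"
    using k by (simp add: uadj_def nth_map del: upt_Suc)
qed

lemma bwd_upath:
  assumes d: "distinct p" and ij: "j \<le> i" "i < length p"
  shows "upath (pedges p) (map (\<lambda>k. p ! (i - k)) [0..<Suc (i - j)]) (p ! i) (p ! j)"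
  unfolding upath_def
proof (intro conjI allI impI)
  show "map (\<lambda>k. p ! (i - k)) [0..<Suc (i - j)] \<noteq> []" by simp
  show "hd (map (\<lambda>k. p ! (i - k)) [0..<Suc (i - j)]) = p ! i" by (simp add: upt_conv_Cons del: upt_Suc)
  show "last (map (\<lambda>k. p ! (i - k)) [0..<Suc (i - j)]) = p ! j" using ij by (simp add: last_map)
  show "distinct (map (\<lambda>k. p ! (i - k)) [0..<Suc (i - j)])"
    using d ij by (auto simp: distinct_map inj_on_def nth_eq_iff_index_eq)
  fix k assume k: "Suc k < length (map (\<lambda>k. p ! (i - k)) [0..<Suc (i - j)])"
  then have k': "Suc k \<le> i - j" by simp
  then have "Suc (i - Suc k) < length p" "i - k = Suc (i - Suc k)" using ij by auto
  then have "(p ! (i - Suc k), p ! (i - k)) \<in> pedges p" unfolding pedges_def by (metis (mono_tags, lifting) mem_Collect_eq)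
  then show "uadj (pedges p) (map (\<lambda>k. p ! (i - k)) [0..<Suc (i - j)] ! k) (map (\<lambda>k. p ! (i - k)) [0..<Suc (i - j)] ! Suc k)"
    using k by (simp add: uadj_def nth_map del: upt_Suc)
qed

lemma the_upath:
  assumes "\<exists>!q. upath E q u v" "upath E q u v"
  shows "(THE q. upath E q u v) = q"
  using assms by (metis theI)

definition ppos :: "nat list \<Rightarrow> (nat \<times> nat \<Rightarrow> real) \<Rightarrow> nat \<Rightarrow> real" where
  "ppos p \<alpha> k = (\<Sum>l<k. \<alpha> (p ! l, p ! Suc l))"

lemma ppos_mono:
  assumes "\<forall>e\<in>pedges p. 0 \<le> \<alpha> e" "i \<le> j" "j < length p"
  shows "ppos p \<alpha> i \<le> ppos p \<alpha> j"
  unfolding ppos_def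
proof (rule sum_mono2)
  fix b assume "b \<in> {..<j} - {..<i}"
  then have "Suc b < length p" using assms by auto
  then have "(p ! b, p ! Suc b) \<in> pedges p" unfolding pedges_def by blast
  then show "0 \<le> \<alpha> (p ! b, p ! Suc b)" using assms(1) by blast
qed (use assms in auto)

lemma tree_dist_path:
  assumes d: "distinct p" and ot: "oriented_tree (set p) (pedges p)"
    and an: "\<forall>e\<in>pedges p. 0 \<le> \<alpha> e"
    and i: "i < length p" and j: "j < length p"
  shows "tree_dist (pedges p) \<alpha> (p ! i) (p ! j) = max 0 (ppos p \<alpha> j - ppos p \<alpha> i)"
proof -
  have uq: "\<exists>!q. upath (pedges p) q (p ! i) (p ! j)"
    using ot i j unfolding oriented_tree_def by auto
  show ?thesis
  proof (cases "i \<le> j")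
    case True
    let ?q = "map (\<lambda>k. p ! (i + k)) [0..<Suc (j - i)]"
    have T: "(THE q. upath (pedges p) q (p ! i) (p ! j)) = ?q"
      by (rule the_upath[OF uq fwd_upath[OF d True j]])
    have "tree_dist (pedges p) \<alpha> (p ! i) (p ! j) = (\<Sum>k<j - i. \<alpha> (p ! (i + k), p ! Suc (i + k)))"
      unfolding tree_dist_def Let_def T
    proof (rule sum.cong)
      fix k assume "k \<in> {..<j - i}"
      then have k: "k < j - i" by simp
      then have "Suc (i + k) < length p" using j by simp
      then have "(p ! (i + k), p ! Suc (i + k)) \<in> pedges p" unfolding pedges_def by blast
      then show "(if (?q ! k, ?q ! Suc k) \<in> pedges p then \<alpha> (?q ! k, ?q ! Suc k) else 0) = \<alpha> (p ! (i + k), p ! Suc (i + k))"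
        using k by (simp add: nth_map del: upt_Suc)
    qed simp
    also have "\<dots> = ppos p \<alpha> j - ppos p \<alpha> i"
      unfolding ppos_def using sum_shift_lt[of "\<lambda>l. \<alpha> (p ! l, p ! Suc l)" i "j - i"] True by simp
    finally show ?thesis using ppos_mono[OF an True j] by simp
  next
    case False
    then have ji: "j \<le> i" by simp
    let ?q = "map (\<lambda>k. p ! (i - k)) [0..<Suc (i - j)]"
    have T: "(THE q. upath (pedges p) q (p ! i) (p ! j)) = ?q"
      by (rule the_upath[OF uq bwd_upath[OF d ji i]])
    have "tree_dist (pedges p) \<alpha> (p ! i) (p ! j) = (\<Sum>k<i - j. 0)"
      unfolding tree_dist_def Let_def T
    proof (rule sum.cong)
      fix k assume "k \<in> {..<i - j}"
      then have k: "k < i - j" by simp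
      have "(p ! (i - k), p ! (i - Suc k)) \<notin> pedges p"
      proof
        assume "(p ! (i - k), p ! (i - Suc k)) \<in> pedges p"
        then obtain m where m: "p ! (i - k) = p ! m" "p ! (i - Suc k) = p ! Suc m" "Suc m < length p"
          unfolding pedges_def by auto
        have "i - k = m" using m(1) d i m(3) by (simp add: nth_eq_iff_index_eq)
        moreover have "i - Suc k = Suc m" using m(2) d i m(3) by (simp add: nth_eq_iff_index_eq)
        ultimately show False using k by simp
      qed
      then show "(if (?q ! k, ?q ! Suc k) \<in> pedges p then \<alpha> (?q ! k, ?q ! Suc k) else 0) = 0"
        using k by (simp add: nth_map del: upt_Suc)
    qed simp
    also have "\<dots> = 0" by simp
    finally show ?thesis using ppos_mono[OF an ji i] by simp
  qed
qed



lemma min_form: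
  fixes P :: "nat \<Rightarrow> real"
  assumes fU: "finite U" and fW: "finite W" and u0: "u0 \<in> U" and w0: "w0 \<in> W"
    and mu: "\<forall>u\<in>U. P u \<le> P u0" and mw: "\<forall>w\<in>W. P w0 \<le> P w"
    and td: "\<forall>u\<in>U. \<forall>w\<in>W. td u w = max 0 (P w - P u)"
  shows "Min {td u w | u w. u \<in> U \<and> w \<in> W} = max 0 (P w0 - P u0)"
proof -
  let ?S = "{td u w | u w. u \<in> U \<and> w \<in> W}"
  have fS: "finite ?S" using finite_image_set2[of "\<lambda>u. u \<in> U" "\<lambda>w. w \<in> W" td] fU fW by simp
  have inS: "td u0 w0 \<in> ?S" using u0 w0 by blast
  have le1: "Min ?S \<le> max 0 (P w0 - P u0)" using Min_le[OF fS inS] td u0 w0 by simp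
  have "Min ?S \<in> ?S" using fS inS by (intro Min_in) auto
  then obtain u w where uw: "u \<in> U" "w \<in> W" "Min ?S = td u w" by blast
  moreover have "P u \<le> P u0" "P w0 \<le> P w" using uw mu mw by auto
  ultimately have "max 0 (P w0 - P u0) \<le> Min ?S" using td uw by (simp add: max_def)
  with le1 show ?thesis by simp
qed

lemma real_form:
  assumes r: "oriented_tree_realisation D V E \<alpha> F" and dp: "directed_path V E"
  shows "\<exists>a b. \<forall>x y. D x y = max 0 (a y - b x)"
proof -
  obtain p where d: "distinct p" and Vp: "set p = V" and Ep: "E = pedges p"
    using dp unfolding directed_path_def pedges_def by blast
  have ot: "oriented_tree (set p) (pedges p)" and an: "\<forall>e\<in>pedges p. 0 \<le> \<alpha> e"
    and st: "\<And>x. subtree V E (F x)" and Df: "\<And>x y. D x y = tree_set_dist E \<alpha> (F x) (F y)"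
    using r Vp Ep unfolding oriented_tree_realisation_def by auto
  have fV: "finite V" using ot Vp by (simp add: oriented_tree_def)
  define idx where "idx v = (SOME k. k < length p \<and> p ! k = v)" for v
  have idx: "idx v < length p \<and> p ! idx v = v" if "v \<in> V" for v
    unfolding idx_def using that Vp by (metis (mono_tags, lifting) in_set_conv_nth someI_ex)
  define Pv where "Pv v = ppos p \<alpha> (idx v)" for v
  have tdv: "tree_dist E \<alpha> u w = max 0 (Pv w - Pv u)" if "u \<in> V" "w \<in> V" for u w
    using tree_dist_path[OF d ot an, of "idx u" "idx w"] idx[OF that(1)] idx[OF that(2)] Ep
    by (simp add: Pv_def)
  have Fs: "F x \<noteq> {}" "F x \<subseteq> V" for x using st[of x] by (auto simp: subtree_def)
  have fF: "finite (F x)" for x using Fs(2) fV finite_subset by blast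
  define a where "a y = Min (Pv ` F y)" for y
  define b where "b x = Max (Pv ` F x)" for x
  show ?thesis
  proof (intro exI allI)
    fix x y
    have "Max (Pv ` F x) \<in> Pv ` F x" using fF[of x] Fs(1)[of x] by (intro Max_in) auto
    then obtain u0 where u0: "u0 \<in> F x" "Pv u0 = b x" unfolding b_def by auto
    have "Min (Pv ` F y) \<in> Pv ` F y" using fF[of y] Fs(1)[of y] by (intro Min_in) auto
    then obtain w0 where w0: "w0 \<in> F y" "Pv w0 = a y" unfolding a_def by auto
    have "tree_set_dist E \<alpha> (F x) (F y) = max 0 (Pv w0 - Pv u0)"
      unfolding tree_set_dist_def
    proof (rule min_form[OF fF fF u0(1) w0(1)])
      show "\<forall>u\<in>F x. Pv u \<le> Pv u0" using u0(2) fF unfolding b_def by auto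
      show "\<forall>w\<in>F y. Pv w0 \<le> Pv w" using w0(2) fF unfolding a_def by auto
      show "\<forall>u\<in>F x. \<forall>w\<in>F y. tree_dist E \<alpha> u w = max 0 (Pv w - Pv u)"
        using tdv Fs(2) by blast
    qed
    then show "D x y = max 0 (a y - b x)" using Df u0 w0 by simp
  qed
qed



lemma walk_mono:
  assumes d: "distinct q"
    and st: "\<And>k. Suc k < length q \<Longrightarrow> q ! Suc k = Suc (q ! k) \<or> q ! k = Suc (q ! Suc k)"
  shows "(\<forall>k<length q. q ! k = q ! 0 + k) \<or> (\<forall>k<length q. q ! k + k = q ! 0)"
proof (cases "length q \<le> 1")
  case True
  then have "\<forall>k<length q. k = 0" by auto
  then show ?thesis by auto
next
  case False
  then have l1: "1 < length q" by simp
  have nd: "q ! k \<noteq> q ! Suc (Suc k)" if "Suc (Suc k) < length q" for k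
    using d that by (simp add: nth_eq_iff_index_eq)
  have "q ! Suc 0 = Suc (q ! 0) \<or> q ! 0 = Suc (q ! Suc 0)" using st[of 0] l1 by simp
  then show ?thesis
  proof
    assume up: "q ! Suc 0 = Suc (q ! 0)"
    have "Suc k < length q \<longrightarrow> q ! k = q ! 0 + k \<and> q ! Suc k = q ! 0 + Suc k" for k
    proof (induction k)
      case 0 then show ?case using up by simp
    next
      case (Suc k)
      show ?case
      proof
        assume k: "Suc (Suc k) < length q"
        then have IH: "q ! k = q ! 0 + k" "q ! Suc k = q ! 0 + Suc k" using Suc by auto
        from st[OF k] nd[OF k] IH show "q ! Suc k = q ! 0 + Suc k \<and> q ! Suc (Suc k) = q ! 0 + Suc (Suc k)"
          by auto
      qed
    qed
    note H = this
    have "\<forall>k<length q. q ! k = q ! 0 + k"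
    proof (intro allI impI)
      fix k assume k: "k < length q"
      show "q ! k = q ! 0 + k"
      proof (cases k)
        case (Suc k') then show ?thesis using H[of k'] k by auto
      qed simp
    qed
    then show ?thesis by blast
  next
    assume dn: "q ! 0 = Suc (q ! Suc 0)"
    have "Suc k < length q \<longrightarrow> q ! k + k = q ! 0 \<and> q ! Suc k + Suc k = q ! 0" for k
    proof (induction k)
      case 0 then show ?case using dn by simp
    next
      case (Suc k)
      show ?case
      proof
        assume k: "Suc (Suc k) < length q"
        then have IH: "q ! k + k = q ! 0" "q ! Suc k + Suc k = q ! 0" using Suc by auto
        from st[OF k] nd[OF k] IH show "q ! Suc k + Suc k = q ! 0 \<and> q ! Suc (Suc k) + Suc (Suc k) = q ! 0"
          by auto
      qed
    qed
    note H = this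
    have "\<forall>k<length q. q ! k + k = q ! 0"
    proof (intro allI impI)
      fix k assume k: "k < length q"
      show "q ! k + k = q ! 0"
      proof (cases k)
        case (Suc k') then show ?thesis using H[of k'] k by auto
      qed simp
    qed
    then show ?thesis by blast
  qed
qed

lemma uadj_upt:
  assumes "uadj (pedges [0..<m]) u v"
  shows "v = Suc u \<or> u = Suc v"
  using assms unfolding uadj_def pedges_def by auto

lemma upath_upt_unique:
  assumes q1: "upath (pedges [0..<m]) q1 u v" and q2: "upath (pedges [0..<m]) q2 u v"
  shows "q1 = q2"
proof -
  have mono: "(\<forall>k<length q. q ! k = u + k) \<and> u + (length q - 1) = v \<or>
              (\<forall>k<length q. q ! k + k = u) \<and> v + (length q - 1) = u"
    if q: "upath (pedges [0..<m]) q u v" for q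
  proof -
    have ne: "q \<noteq> []" and h: "hd q = u" and l: "last q = v" and d: "distinct q"
      and a: "\<And>k. Suc k < length q \<Longrightarrow> uadj (pedges [0..<m]) (q ! k) (q ! Suc k)"
      using q unfolding upath_def by auto
    have q0: "q ! 0 = u" using ne h by (simp add: hd_conv_nth)
    have ql: "q ! (length q - 1) = v" using ne l by (simp add: last_conv_nth)
    have lp: "0 < length q" using ne by simp
    from walk_mono[OF d uadj_upt[OF a]] q0 have "(\<forall>k<length q. q ! k = u + k) \<or> (\<forall>k<length q. q ! k + k = u)"
      by simp
    then show ?thesis
    proof
      assume A: "\<forall>k<length q. q ! k = u + k"
      then show ?thesis using ql lp by (metis diff_less zero_less_one)
    next
      assume A: "\<forall>k<length q. q ! k + k = u"
      then show ?thesis using ql lp by (metis diff_less zero_less_one)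
    qed
  qed
  have n1: "q1 \<noteq> []" and n2: "q2 \<noteq> []" using q1 q2 by (auto simp: upath_def)
  show ?thesis
  proof (rule nth_equalityI)
    have e1: "u + (length q1 - 1) = v \<or> v + (length q1 - 1) = u" using mono[OF q1] by blast
    have e2: "u + (length q2 - 1) = v \<or> v + (length q2 - 1) = u" using mono[OF q2] by blast
    have p1: "0 < length q1" and p2: "0 < length q2" using n1 n2 by auto
    from e1 e2 p1 p2 show len: "length q1 = length q2" by arith
    fix k assume k1: "k < length q1"
    then have k2: "k < length q2" using len by simp
    from mono[OF q1] show "q1 ! k = q2 ! k"
    proof
      assume A: "(\<forall>k<length q1. q1 ! k = u + k) \<and> u + (length q1 - 1) = v"
      from mono[OF q2] show ?thesis
      proof
        assume B: "(\<forall>k<length q2. q2 ! k = u + k) \<and> u + (length q2 - 1) = v"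
        then show ?thesis using A k1 k2 by simp
      next
        assume B: "(\<forall>k<length q2. q2 ! k + k = u) \<and> v + (length q2 - 1) = u"
        have "u + (length q1 - 1) = v" "v + (length q2 - 1) = u" using A B by auto
        then have "length q1 - 1 = 0" using len by arith
        then have k0: "k = 0" using k1 by simp
        have "q1 ! 0 = u" "q2 ! 0 = u" using A B k1 k2 k0 by auto
        then show ?thesis using k0 by simp
      qed
    next
      assume A: "(\<forall>k<length q1. q1 ! k + k = u) \<and> v + (length q1 - 1) = u"
      from mono[OF q2] show ?thesis
      proof
        assume B: "(\<forall>k<length q2. q2 ! k = u + k) \<and> u + (length q2 - 1) = v"
        have "v + (length q1 - 1) = u" "u + (length q2 - 1) = v" using A B by auto
        then have "length q1 - 1 = 0" using len by arith
        then have k0: "k = 0" using k1 by simp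
        have "q1 ! 0 = u" "q2 ! 0 = u" using A B k1 k2 k0 by auto
        then show ?thesis using k0 by simp
      next
        assume B: "(\<forall>k<length q2. q2 ! k + k = u) \<and> v + (length q2 - 1) = u"
        then have "q2 ! k + k = u" "q1 ! k + k = u" using A k1 k2 by auto
        then show ?thesis by simp
      qed
    qed
  qed
qed



lemma nth_upt0[simp]: "i < m \<Longrightarrow> [0..<m] ! i = i" by simp

lemma ot_upt:
  assumes "0 < m"
  shows "oriented_tree (set [0..<m]) (pedges [0..<m])"
  unfolding oriented_tree_def
proof (intro conjI ballI allI impI)
  show "finite (set [0..<m])" by simp
  show "set [0..<m] \<noteq> {}" using assms by simp
  show "pedges [0..<m] \<subseteq> set [0..<m] \<times> set [0..<m]" by (auto simp: pedges_def)
  fix u v assume "(u, v) \<in> pedges [0..<m]"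
  then show "u \<noteq> v" "(v, u) \<notin> pedges [0..<m]" by (auto simp: pedges_def)
next
  fix u v assume u: "u \<in> set [0..<m]" and v: "v \<in> set [0..<m]"
  have ex: "\<exists>q. upath (pedges [0..<m]) q u v"
  proof (cases "u \<le> v")
    case True
    show ?thesis using fwd_upath[of "[0..<m]" u v] True u v by auto
  next
    case False
    show ?thesis using bwd_upath[of "[0..<m]" v u] False u v by auto
  qed
  then show "\<exists>!q. upath (pedges [0..<m]) q u v" using upath_upt_unique by blast
qed

lemma form_real:
  fixes D :: "'a::finite \<Rightarrow> 'a \<Rightarrow> real" and a b :: "'a \<Rightarrow> real"
  assumes ab: "\<And>x. a x \<le> b x" and Df: "\<And>x y. D x y = max 0 (a y - b x)"
  shows "\<exists>V E \<alpha> F. oriented_tree_realisation D V E \<alpha> F \<and> directed_path V E"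
proof -
  define Vals where "Vals = range a \<union> range b"
  have fVals: "finite Vals" by (simp add: Vals_def)
  define L where "L = sorted_list_of_set Vals"
  define m where "m = length L"
  have sL: "sorted L" and setL: "set L = Vals" using fVals by (simp_all add: L_def)
  have idx: "\<exists>i<m. L ! i = v" if "v \<in> Vals" for v
    using that setL by (metis in_set_conv_nth m_def)
  have m0: "0 < m" using idx[of "a undefined"] by (auto simp: Vals_def)
  define p where "p = [0..<m]"
  define E where "E = pedges p"
  define \<alpha> where "\<alpha> e = L ! snd e - L ! fst e" for e
  define F where "F x = {i. i < m \<and> a x \<le> L ! i \<and> L ! i \<le> b x}" for x
  have dp: "distinct p" by (simp add: p_def)
  have ot: "oriented_tree (set p) (pedges p)" unfolding p_def by (rule ot_upt[OF m0])
  have an: "\<forall>e\<in>pedges p. 0 \<le> \<alpha> e"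
    unfolding pedges_def p_def \<alpha>_def using sL by (auto simp: m_def sorted_iff_nth_mono)
  have pos: "ppos p \<alpha> k = L ! k - L ! 0" if "k < m" for k
  proof -
    have "ppos p \<alpha> k = (\<Sum>l<k. L ! Suc l - L ! l)"
      unfolding ppos_def using that by (intro sum.cong) (auto simp: p_def \<alpha>_def)
    also have "\<dots> = L ! k - L ! 0" by (rule sum_lessThan_telescope)
    finally show ?thesis .
  qed
  have td: "tree_dist E \<alpha> i j = max 0 (L ! j - L ! i)" if "i < m" "j < m" for i j
    using tree_dist_path[OF dp ot an, of i j] that pos[of i] pos[of j]
    by (simp add: E_def p_def)
  have fF: "finite (F x)" for x by (simp add: F_def)
  have sub: "subtree (set p) E (F x)" for x
    unfolding subtree_def
  proof (intro conjI ballI)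
    obtain i where "i < m" "L ! i = a x" using idx[of "a x"] by (auto simp: Vals_def)
    then have "i \<in> F x" using ab[of x] by (simp add: F_def)
    then show "F x \<noteq> {}" by blast
    show "F x \<subseteq> set p" by (auto simp: F_def p_def)
  next
    fix u v assume u: "u \<in> F x" and v: "v \<in> F x"
    have um: "u < m" and vm: "v < m" using u v by (auto simp: F_def)
    show "\<exists>q. upath E q u v \<and> set q \<subseteq> F x"
    proof (cases "u \<le> v")
      case True
      let ?q = "map (\<lambda>k. p ! (u + k)) [0..<Suc (v - u)]"
      have "upath E ?q u v" using fwd_upath[OF dp True] vm True by (simp add: E_def p_def)
      moreover have "set ?q \<subseteq> F x"
      proof
        fix z assume "z \<in> set ?q"
        then have k: "u \<le> z" "z \<le> v" using vm True by (auto simp: p_def)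
        then have "L ! u \<le> L ! z" "L ! z \<le> L ! v" using sL vm True
          by (auto intro!: sorted_nth_mono simp: m_def)
        then show "z \<in> F x" using u v k vm True by (auto simp: F_def)
      qed
      ultimately show ?thesis by blast
    next
      case False
      let ?q = "map (\<lambda>k. p ! (u - k)) [0..<Suc (u - v)]"
      have "upath E ?q u v" using bwd_upath[of p v u] dp um False by (simp add: E_def p_def)
      moreover have "set ?q \<subseteq> F x"
      proof
        fix z assume "z \<in> set ?q"
        then have k: "v \<le> z" "z \<le> u" using um False by (auto simp: p_def)
        then have "L ! v \<le> L ! z" "L ! z \<le> L ! u" using sL um False
          by (auto intro!: sorted_nth_mono simp: m_def)
        then show "z \<in> F x" using u v k um False by (auto simp: F_def)
      qed
      ultimately show ?thesis by blast
    qed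
  qed
  have dist: "D x y = tree_set_dist E \<alpha> (F x) (F y)" for x y
  proof -
    obtain u0 where u0: "u0 < m" "L ! u0 = b x" using idx[of "b x"] by (auto simp: Vals_def)
    obtain w0 where w0: "w0 < m" "L ! w0 = a y" using idx[of "a y"] by (auto simp: Vals_def)
    have u0F: "u0 \<in> F x" using u0 ab[of x] by (simp add: F_def)
    have w0F: "w0 \<in> F y" using w0 ab[of y] by (simp add: F_def)
    have "tree_set_dist E \<alpha> (F x) (F y) = max 0 (L ! w0 - L ! u0)"
      unfolding tree_set_dist_def
    proof (rule min_form[OF fF fF u0F w0F])
      show "\<forall>u\<in>F x. L ! u \<le> L ! u0" using u0 by (simp add: F_def)
      show "\<forall>w\<in>F y. L ! w0 \<le> L ! w" using w0 by (simp add: F_def)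
      show "\<forall>u\<in>F x. \<forall>w\<in>F y. tree_dist E \<alpha> u w = max 0 (L ! w - L ! u)"
        using td by (simp add: F_def)
    qed
    then show ?thesis using Df[of x y] u0 w0 by simp
  qed
  have "oriented_tree_realisation D (set p) E \<alpha> F"
    unfolding oriented_tree_realisation_def
    using ot an sub dist by (simp add: E_def)
  moreover have "directed_path (set p) E"
    unfolding directed_path_def E_def pedges_def using dp by blast
  ultimately show ?thesis by blast
qed


theorem mainTheorem12:
  fixes D :: "'a::finite \<Rightarrow> 'a \<Rightarrow> real"
  assumes "directed_distance D"
  shows "tight_span_is_tree D \<longleftrightarrow>
    (\<exists>V E \<alpha> F. oriented_tree_realisation D V E \<alpha> F \<and> directed_path V E)"
proof
  assume tr: "tight_span_is_tree D"
  have cg: "comparable_gammas D" by (rule tree_comp[OF assms tr])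
  show "\<exists>V E \<alpha> F. oriented_tree_realisation D V E \<alpha> F \<and> directed_path V E"
    by (rule form_real[of "aa D" "bb D" D]) (simp_all add: aa_le_bb[OF assms] comp_form[OF assms cg])
next
  assume "\<exists>V E \<alpha> F. oriented_tree_realisation D V E \<alpha> F \<and> directed_path V E"
  then obtain V E \<alpha> F where r: "oriented_tree_realisation D V E \<alpha> F" and dp: "directed_path V E" by blast
  obtain a b where "\<forall>x y. D x y = max 0 (a y - b x)" using real_form[OF r dp] by blast
  then show "tight_span_is_tree D" by (intro form_tree[of D a b]) simp
qed

end
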